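(* Let $S$ be an epsilon-strongly $G$-graded ring such that $S_g\neq0$ for only finitely many $g\in G$. Define recursively $1_{(0)}=1_S$ and, as long as $1_{(j)}\neq0$: $S^{(j)}=1_{(j)}S$, which is an epsilon-strongly $G$-graded ring with components $1_{(j)}S_g$, identity $1_{(j)}$ and $\epsilon^{(j)}_g=1_{(j)}\epsilon_g$; let $e^{(j)}_1,\dots,e^{(j)}_{k_j}$ be the minimal elements of $B(\mathcal{E}^{(j)}_G)^*$, where $B(\mathcal{E}^{(j)}_G)$ is the multiplicative semigroup generated by $\{\epsilon^{(j)}_g:g\in G\}$; and set $1_{(j+1)}=1_{(j)}-\sum_{i=1}^{k_j}e^{(j)}_i$. Assume that at every step $j$ with $1_{(j)}\neq0$ all the minimal elements $e^{(j)}_i$ are epsilon-central in $S^{(j)}$, i.e. $N^{(j)}(e^{(j)}_i)=\{g\in G:e^{(j)}_i\epsilon^{(j)}_g=e^{(j)}_i\}$ is a subgroup of $G$. Then the process stops after finitely many steps and $S$ is a finite direct sum of rings, each of which is either of the form $e^{(j)}_iS$ and strongly $N^{(j)}(e^{(j)}_i)$-graded (by the components $e^{(j)}_iS_g$, $g\in N^{(j)}(e^{(j)}_i)$), or is a ring $1_{(l)}S$ whose induced gradation is trivial (i.e. $1_{(l)}S_g=0$ for all $g\neq e$).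
   Context: $G$ is a group with identity $e$; $S=\bigoplus_{g\in G}S_g$ is an associative unital ring graded by $G$, $R=S_e$, $XY$ denotes finite sums of products. $S$ is epsilon-strongly graded: each ideal $S_gS_{g^{-1}}$ of $R$ has an identity $\epsilon_g$ with $\epsilon_gs=s=s\epsilon_{g^{-1}}$ for $s\in S_g$; $\epsilon_e=1_S$; each $\epsilon_g$ is an idempotent in $Z(R)$. For a semigroup $B$ of idempotents containing $0$, $B^*=B\setminus\{0\}$ is ordered by $a\le b$ iff $a=ab$. A ring graded by a subgroup $H$ is strongly $H$-graded if $A_gA_h=A_{gh}$ for all $g,h\in H$. *)

theory Defs
  imports Main
begin

text \<open>Conventions: the ring S is the whole type 'a (class ring_1); the group G is the whole
type 'g (class group_add, not necessarily commutative), written additively: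
product gh = g + h, inverse -g, identity 0.  A G-grading is given by the family of
components Sg :: 'g => 'a set.\<close>

definition prodset :: "'a::ring_1 set \<Rightarrow> 'a set \<Rightarrow> 'a set" where
  "prodset X Y = {\<Sum>i<n. x i * y i | (n::nat) x y. \<forall>i<n. x i \<in> X \<and> y i \<in> Y}"

definition additive_subgroup :: "'a::ring_1 set \<Rightarrow> bool" where
  "additive_subgroup A \<longleftrightarrow> 0 \<in> A \<and> (\<forall>x\<in>A. \<forall>y\<in>A. x + y \<in> A \<and> - x \<in> A)"

definition graded :: "('g::group_add \<Rightarrow> 'a::ring_1 set) \<Rightarrow> bool" where
  "graded Sg \<longleftrightarrow>
     (\<forall>g. additive_subgroup (Sg g)) \<and>
     (\<forall>g h. \<forall>x\<in>Sg g. \<forall>y\<in>Sg h. x * y \<in> Sg (g + h)) \<and>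
     (\<forall>s. \<exists>!f. finite {g. f g \<noteq> 0} \<and> (\<forall>g. f g \<in> Sg g) \<and> s = sum f {g. f g \<noteq> 0})"

definition is_identity_of :: "'a::ring_1 set \<Rightarrow> 'a \<Rightarrow> bool" where
  "is_identity_of I e \<longleftrightarrow> e \<in> I \<and> (\<forall>x\<in>I. e * x = x \<and> x * e = x)"

definition eps :: "('g::group_add \<Rightarrow> 'a::ring_1 set) \<Rightarrow> 'g \<Rightarrow> 'a" where
  "eps Sg g = (THE e. is_identity_of (prodset (Sg g) (Sg (- g))) e)"

definition epsilon_strongly_graded :: "('g::group_add \<Rightarrow> 'a::ring_1 set) \<Rightarrow> bool" where
  "epsilon_strongly_graded Sg \<longleftrightarrow> graded Sg \<and>
     (\<exists>\<epsilon>. \<forall>g. is_identity_of (prodset (Sg g) (Sg (- g))) (\<epsilon> g) \<and>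
          (\<forall>s\<in>Sg g. \<epsilon> g * s = s \<and> s * \<epsilon> (- g) = s))"

definition sgen :: "'a::ring_1 set \<Rightarrow> 'a set" where
  "sgen A = {prod_list xs | xs. xs \<noteq> [] \<and> set xs \<subseteq> A}"

text \<open>B(E^(j)) for the ring u S, where u = 1_(j): generated by u * eps_g.\<close>
definition Bsg :: "('g::group_add \<Rightarrow> 'a::ring_1 set) \<Rightarrow> 'a \<Rightarrow> 'a set" where
  "Bsg Sg u = sgen {u * eps Sg g | g. True}"

text \<open>Minimal elements of B^* w.r.t.  a \<le> b iff a = a b.\<close>
definition minimals :: "('g::group_add \<Rightarrow> 'a::ring_1 set) \<Rightarrow> 'a \<Rightarrow> 'a set" where
  "minimals Sg u = {a \<in> Bsg Sg u - {0}. \<forall>b \<in> Bsg Sg u - {0}. b = b * a \<longrightarrow> b = a}"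

text \<open>The sequence 1_(j).  Once 1_(j) = 0 it stays 0 (B^* is then empty).\<close>
fun one_seq :: "('g::group_add \<Rightarrow> 'a::ring_1 set) \<Rightarrow> nat \<Rightarrow> 'a" where
  "one_seq Sg 0 = 1"
| "one_seq Sg (Suc j) = one_seq Sg j - sum id (minimals Sg (one_seq Sg j))"

text \<open>N^(j)(e) = {g. e * eps^(j)_g = e} with eps^(j)_g = 1_(j) eps_g.\<close>
definition Nset :: "('g::group_add \<Rightarrow> 'a::ring_1 set) \<Rightarrow> 'a \<Rightarrow> 'a \<Rightarrow> 'g set" where
  "Nset Sg u e = {g. e * (u * eps Sg g) = e}"

definition is_subgroup :: "'g::group_add set \<Rightarrow> bool" where
  "is_subgroup H \<longleftrightarrow> 0 \<in> H \<and> (\<forall>g\<in>H. \<forall>h\<in>H. g + h \<in> H) \<and> (\<forall>g\<in>H. - g \<in> H)"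

definition lmult :: "'a::ring_1 \<Rightarrow> 'a set \<Rightarrow> 'a set" where
  "lmult e A = {e * s | s. s \<in> A}"

definition strongly_graded_by :: "('g::group_add \<Rightarrow> 'a::ring_1 set) \<Rightarrow> 'a \<Rightarrow> 'g set \<Rightarrow> bool" where
  "strongly_graded_by Sg e H \<longleftrightarrow>
     (\<forall>g. g \<notin> H \<longrightarrow> lmult e (Sg g) = {0}) \<and>
     (\<forall>g\<in>H. \<forall>h\<in>H. prodset (lmult e (Sg g)) (lmult e (Sg h)) = lmult e (Sg (g + h)))"

definition trivially_graded :: "('g::group_add \<Rightarrow> 'a::ring_1 set) \<Rightarrow> 'a \<Rightarrow> bool" where
  "trivially_graded Sg e \<longleftrightarrow> (\<forall>g. g \<noteq> 0 \<longrightarrow> lmult e (Sg g) = {0})"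

end

theory Submission
  imports Defs
begin


lemma sum_in_addsub0:
  assumes "additive_subgroup A"
  shows "(\<forall>i<(n::nat). x i \<in> A) \<longrightarrow> (\<Sum>i<n. x i) \<in> A"
proof (induction n)
  case 0 then show ?case using assms(1) by (simp add: additive_subgroup_def)
next
  case (Suc n) then show ?case using assms(1) by (simp add: additive_subgroup_def)
qed

lemma sum_in_addsub:
  assumes "additive_subgroup A" "\<forall>i<(n::nat). x i \<in> A"
  shows "(\<Sum>i<n. x i) \<in> A"
  using sum_in_addsub0[OF assms(1)] assms(2) by blast

lemma mem_prodset: "z \<in> prodset X Y \<longleftrightarrow> (\<exists>(n::nat) x y. z = (\<Sum>i<n. x i * y i) \<and> (\<forall>i<n. x i \<in> X \<and> y i \<in> Y))"
  unfolding prodset_def by auto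

lemma identity_unique: "is_identity_of I a \<Longrightarrow> is_identity_of I b \<Longrightarrow> a = b"
  unfolding is_identity_of_def by metis

locale esgr =
  fixes Sg :: "'g::group_add \<Rightarrow> 'a::ring_1 set"
  assumes esg: "epsilon_strongly_graded Sg"
    and fin: "finite {g. Sg g \<noteq> {0}}"
begin

abbreviation ep where "ep \<equiv> eps Sg"
abbreviation P :: "'g list \<Rightarrow> 'a" where "P gs \<equiv> prod_list (map (eps Sg) gs)"

lemma gr: "graded Sg" using esg by (simp add: epsilon_strongly_graded_def)
lemma addsub: "additive_subgroup (Sg g)" using gr by (simp add: graded_def)
lemma zero_in: "0 \<in> Sg g" using addsub by (simp add: additive_subgroup_def)
lemma mult_in: "x \<in> Sg g \<Longrightarrow> y \<in> Sg h \<Longrightarrow> x * y \<in> Sg (g + h)" using gr by (simp add: graded_def)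
lemma decomp: "\<exists>f. finite {g. f g \<noteq> 0} \<and> (\<forall>g. f g \<in> Sg g) \<and> s = sum f {g. f g \<noteq> 0}"
  using gr unfolding graded_def by metis

lemma eps_prop: "is_identity_of (prodset (Sg g) (Sg (- g))) (ep g) \<and> (\<forall>s\<in>Sg g. ep g * s = s \<and> s * ep (- g) = s)"
proof -
  obtain \<epsilon> where h: "\<forall>g. is_identity_of (prodset (Sg g) (Sg (- g))) (\<epsilon> g) \<and> (\<forall>s\<in>Sg g. \<epsilon> g * s = s \<and> s * \<epsilon> (- g) = s)"
    using esg unfolding epsilon_strongly_graded_def by blast
  have "ep g' = \<epsilon> g'" for g'
    unfolding eps_def using h identity_unique by blast
  then show ?thesis using h by simp
qed

lemma eps_left: "s \<in> Sg g \<Longrightarrow> ep g * s = s" using eps_prop by blast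
lemma eps_right: "s \<in> Sg g \<Longrightarrow> s * ep (- g) = s" using eps_prop by blast
lemma eps_right': "s \<in> Sg (- g) \<Longrightarrow> s * ep g = s" using eps_right[of s "-g"] by simp
lemma eps_in_I: "ep g \<in> prodset (Sg g) (Sg (- g))" using eps_prop is_identity_of_def by blast
lemma eps_ident: "x \<in> prodset (Sg g) (Sg (- g)) \<Longrightarrow> ep g * x = x \<and> x * ep g = x"
  using eps_prop is_identity_of_def by blast

lemma eps_repr: "\<exists>(n::nat) a b. ep g = (\<Sum>i<n. a i * b i) \<and> (\<forall>i<n. a i \<in> Sg g \<and> b i \<in> Sg (- g))"
  using eps_in_I unfolding mem_prodset by blast

lemma prodset_sub: "prodset (Sg g) (Sg h) \<subseteq> Sg (g + h)"
proof
  fix z assume "z \<in> prodset (Sg g) (Sg h)"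
  then obtain n :: nat and x y where "z = (\<Sum>i<n. x i * y i)" "\<forall>i<n. x i \<in> Sg g \<and> y i \<in> Sg h"
    unfolding mem_prodset by blast
  then show "z \<in> Sg (g + h)" using sum_in_addsub[OF addsub, of n "\<lambda>i. x i * y i"] mult_in by blast
qed

lemma eps_S0: "ep g \<in> Sg 0" using eps_in_I prodset_sub[of g "-g"] by auto

lemma eps_idem: "ep g * ep g = ep g" using eps_in_I eps_ident by blast

lemma eps_comm_S0: assumes "r \<in> Sg 0" shows "r * ep g = ep g * r"
proof -
  obtain n :: nat and a b where ab: "ep g = (\<Sum>i<n. a i * b i)" "\<forall>i<n. a i \<in> Sg g \<and> b i \<in> Sg (- g)"
    using eps_repr by blast
  have "r * ep g = (\<Sum>i<n. (r * a i) * b i)" by (simp add: ab sum_distrib_left mult.assoc)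
  moreover have "\<forall>i<n. r * a i \<in> Sg g \<and> b i \<in> Sg (- g)" using ab mult_in[OF assms, of _ g] by simp
  ultimately have 1: "r * ep g \<in> prodset (Sg g) (Sg (- g))" unfolding mem_prodset
    by (intro exI[of _ n] exI[of _ "\<lambda>i. r * a i"] exI[of _ b]) simp
  have "ep g * r = (\<Sum>i<n. a i * (b i * r))" by (simp add: ab sum_distrib_right mult.assoc)
  moreover have "\<forall>i<n. a i \<in> Sg g \<and> b i * r \<in> Sg (- g)" using ab mult_in[of _ "-g" r 0] assms by fastforce
  ultimately have 2: "ep g * r \<in> prodset (Sg g) (Sg (- g))" unfolding mem_prodset
    by (intro exI[of _ n] exI[of _ a] exI[of _ "\<lambda>i. b i * r"]) simp
  have "r * ep g = ep g * (r * ep g)" using 1 eps_ident by metis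
  also have "... = (ep g * r) * ep g" by (simp add: mult.assoc)
  also have "... = ep g * r" using 2 eps_ident by metis
  finally show ?thesis .
qed

lemma eps_comm: "ep g * ep h = ep h * ep g" using eps_comm_S0[OF eps_S0] by simp

lemma eps_shift: assumes s: "s \<in> Sg g" shows "s * ep h = ep (g + h) * s"
proof -
  obtain n :: nat and a b where ab: "ep h = (\<Sum>i<n. a i * b i)" "\<forall>i<n. a i \<in> Sg h \<and> b i \<in> Sg (- h)"
    using eps_repr by blast
  have 1: "s * ep h = (\<Sum>i<n. (s * a i) * b i)" by (simp add: ab sum_distrib_left mult.assoc)
  have 2: "ep (g + h) * ((s * a i) * b i) = (s * a i) * b i" if "i < n" for i
  proof -
    have "s * a i \<in> Sg (g + h)" using mult_in s ab that by blast
    then have "ep (g + h) * (s * a i) = s * a i" by (rule eps_left)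
    then show ?thesis by (metis mult.assoc)
  qed
  have A: "ep (g + h) * (s * ep h) = s * ep h"
    unfolding 1 sum_distrib_left using 2 by simp
  obtain m :: nat and c d where cd: "ep (g + h) = (\<Sum>i<m. c i * d i)" "\<forall>i<m. c i \<in> Sg (g + h) \<and> d i \<in> Sg (- (g + h))"
    using eps_repr by blast
  have 3: "ep (g + h) * s = (\<Sum>i<m. c i * (d i * s))" by (simp add: cd sum_distrib_right mult.assoc)
  have 4: "c i * (d i * s) * ep h = c i * (d i * s)" if "i < m" for i
  proof -
    have "d i * s \<in> Sg (- (g + h) + g)" using mult_in s cd that by blast
    moreover have "- (g + h) + g = - h" by (simp add: minus_add add.assoc)
    ultimately have "d i * s * ep h = d i * s" using eps_right' by simp
    then show ?thesis by (metis mult.assoc)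
  qed
  have B: "ep (g + h) * s * ep h = ep (g + h) * s"
    unfolding 3 sum_distrib_right using 4 by simp
  have "s * ep h = ep (g + h) * (s * ep h)" using A by simp
  also have "... = ep (g + h) * s" using B by (simp add: mult.assoc)
  finally show ?thesis .
qed

lemma eps_shift_left: assumes s: "s \<in> Sg g" shows "ep h * s = s * ep (- g + h)"
  using eps_shift[OF s, of "- g + h"] by (simp add: add.assoc[symmetric])

lemma central_from_homog: assumes "\<And>g s. s \<in> Sg g \<Longrightarrow> a * s = s * a" shows "a * x = x * a"
proof -
  obtain f where f: "\<forall>g. f g \<in> Sg g" "x = sum f {g. f g \<noteq> 0}" using decomp by blast
  show ?thesis unfolding f(2) sum_distrib_left sum_distrib_right using assms f(1) by (intro sum.cong) auto
qed

lemma ident_from_homog: assumes "\<And>g s. s \<in> Sg g \<Longrightarrow> a * s = s" shows "a * x = x"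
proof -
  obtain f where f: "\<forall>g. f g \<in> Sg g" "x = sum f {g. f g \<noteq> 0}" using decomp by blast
  show ?thesis unfolding f(2) sum_distrib_left using assms f(1) by (intro sum.cong) auto
qed

lemma eps0: "ep 0 = 1"
proof -
  have "ep 0 * s = s" if "s \<in> Sg g" for g s
    using eps_shift_left[OF that, of 0] eps_right[OF that] by simp
  then have "ep 0 * 1 = 1" by (rule ident_from_homog)
  then show ?thesis by simp
qed

lemma eps_zero_supp: assumes "Sg g = {0}" shows "ep g = 0"
proof -
  obtain n :: nat and a b where ab: "ep g = (\<Sum>i<n. a i * b i)" "\<forall>i<n. a i \<in> Sg g \<and> b i \<in> Sg (- g)"
    using eps_repr by blast
  then show ?thesis using assms by simp
qed

lemma P_comm_eps: "ep h * P gs = P gs * ep h"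
proof (induction gs)
  case (Cons g gs)
  have "ep h * P (g # gs) = (ep h * ep g) * P gs" by (simp add: mult.assoc)
  also have "... = ep g * (ep h * P gs)" by (simp add: eps_comm mult.assoc)
  also have "... = P (g # gs) * ep h" using Cons by (simp add: mult.assoc)
  finally show ?case .
qed simp

lemma P_comm: "P gs * P ks = P ks * P gs"
proof (induction gs)
  case (Cons g gs)
  have "P (g # gs) * P ks = ep g * (P ks * P gs)" using Cons by (simp add: mult.assoc)
  also have "... = (ep g * P ks) * P gs" by (simp add: mult.assoc)
  also have "... = (P ks * ep g) * P gs" by (subst P_comm_eps) (rule refl)
  also have "... = P ks * P (g # gs)" by (simp add: mult.assoc)
  finally show ?case .
qed simp

lemma P_absorb: "g \<in> set ks \<Longrightarrow> P ks * ep g = P ks"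
proof (induction ks)
  case (Cons k ks)
  show ?case
  proof (cases "g = k")
    case True
    have "P (k # ks) * ep k = ep k * (P ks * ep k)" by (simp add: mult.assoc)
    also have "... = (ep k * ep k) * P ks" by (simp add: P_comm_eps mult.assoc)
    also have "... = P (k # ks)" by (simp add: eps_idem)
    finally show ?thesis using True by simp
  next
    case False
    then show ?thesis using Cons by (simp add: mult.assoc)
  qed
qed simp

lemma P_absorb_list: "set gs \<subseteq> set ks \<Longrightarrow> P ks * P gs = P ks"
proof (induction gs)
  case (Cons g gs)
  then have "g \<in> set ks" "P ks * P gs = P ks" by auto
  have "P ks * P (g # gs) = (P ks * ep g) * P gs" by (simp add: mult.assoc)
  also have "... = P ks" using P_absorb[OF \<open>g \<in> set ks\<close>] \<open>P ks * P gs = P ks\<close> by simp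
  finally show ?case .
qed simp

lemma P_set_eq: "set gs = set ks \<Longrightarrow> P gs = P ks"
  using P_absorb_list[of gs ks] P_absorb_list[of ks gs] P_comm[of gs ks] by simp

lemma P_idem: "P gs * P gs = P gs" using P_absorb_list by simp

lemma P_zero: "g \<in> set gs \<Longrightarrow> ep g = 0 \<Longrightarrow> P gs = 0"
  using P_absorb[of g gs] by simp

lemma P_shift: "s \<in> Sg g \<Longrightarrow> s * P ks = P (map (\<lambda>h. g + h) ks) * s"
proof (induction ks)
  case (Cons k ks)
  have "s * P (k # ks) = (s * ep k) * P ks" by (simp add: mult.assoc)
  also have "... = ep (g + k) * (s * P ks)" using eps_shift[OF Cons.prems] by (simp add: mult.assoc)
  also have "... = P (map (\<lambda>h. g + h) (k # ks)) * s" using Cons by (simp add: mult.assoc)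
  finally show ?case .
qed simp

lemma P_shift_left: "s \<in> Sg g \<Longrightarrow> P ks * s = s * P (map (\<lambda>h. - g + h) ks)"
proof (induction ks)
  case (Cons k ks)
  have "P (k # ks) * s = ep k * (P ks * s)" by (simp add: mult.assoc)
  also have "... = (ep k * s) * P (map (\<lambda>h. - g + h) ks)" using Cons by (simp add: mult.assoc)
  also have "... = s * P (map (\<lambda>h. - g + h) (k # ks))" using eps_shift_left[OF Cons.prems] by (simp add: mult.assoc)
  finally show ?case .
qed simp

end



lemma exists_minimal:
  fixes X :: "'a::ring_1 set"
  assumes fX: "finite X" and x: "x \<in> X" "x \<noteq> 0"
    and cm: "\<And>a b. a \<in> X \<Longrightarrow> b \<in> X \<Longrightarrow> a * b = b * a"
    and id: "\<And>a. a \<in> X \<Longrightarrow> a * a = a"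
  shows "\<exists>a\<in>X-{0}. \<forall>b\<in>X-{0}. b = b * a \<longrightarrow> b = a"
proof -
  define D where "D a = {y \<in> X-{0}. y = y * a}" for a
  obtain a where a: "a \<in> X-{0}" and amin: "\<And>b. b \<in> X-{0} \<Longrightarrow> card (D a) \<le> card (D b)"
    using ex_has_least_nat[of "\<lambda>a. a \<in> X-{0}" x "\<lambda>a. card (D a)"] x by blast
  show ?thesis
  proof (intro bexI[OF _ a] ballI impI)
    fix b assume b: "b \<in> X-{0}" "b = b * a"
    show "b = a"
    proof (rule ccontr)
      assume ne: "b \<noteq> a"
      have sub: "D b \<subseteq> D a"
      proof
        fix y assume "y \<in> D b"
        then have "y \<in> X-{0}" "y = y * b" unfolding D_def by auto
        then have "y * a = y" using b by (metis mult.assoc)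
        then show "y \<in> D a" using \<open>y \<in> X-{0}\<close> unfolding D_def by auto
      qed
      have "a \<in> D a" using a id unfolding D_def by auto
      moreover have "a \<notin> D b"
      proof
        assume "a \<in> D b"
        then have "a = a * b" unfolding D_def by auto
        also have "... = b * a" using cm a b by auto
        finally show False using b ne by simp
      qed
      ultimately have "D b \<subset> D a" using sub by blast
      moreover have "finite (D a)" using fX unfolding D_def by auto
      ultimately have "card (D b) < card (D a)" by (rule psubset_card_mono[rotated])
      then show False using amin[OF b(1)] by simp
    qed
  qed
qed

lemma minimal_orth:
  fixes X :: "'a::ring_1 set"
  assumes cm: "\<And>a b. a \<in> X \<Longrightarrow> b \<in> X \<Longrightarrow> a * b = b * a"
    and id: "\<And>a. a \<in> X \<Longrightarrow> a * a = a"
    and cl: "\<And>a b. a \<in> X \<Longrightarrow> b \<in> X \<Longrightarrow> a * b \<in> X"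
    and a: "a \<in> X-{0}" "\<forall>c\<in>X-{0}. c = c * a \<longrightarrow> c = a"
    and b: "b \<in> X-{0}" "\<forall>c\<in>X-{0}. c = c * b \<longrightarrow> c = b"
    and ne: "a \<noteq> b"
  shows "a * b = 0"
proof (rule ccontr)
  assume nz: "a * b \<noteq> 0"
  have ab: "a * b \<in> X-{0}" using cl a b nz by auto
  have "a * b * a = a * (b * a)" by (simp add: mult.assoc)
  also have "... = a * (a * b)" using cm a(1) b(1) by simp
  also have "... = (a * a) * b" by (simp add: mult.assoc)
  also have "... = a * b" using id a(1) by simp
  finally have "a * b * a = a * b" .
  then have "a * b = a" using a(2) ab by metis
  moreover have "a * b * b = a * b" using id b(1) by (simp add: mult.assoc)
  then have "a * b = b" using b(2) ab by metis
  ultimately show False using ne by simp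
qed

context esgr begin

lemma Bsg_char:
  assumes uc: "\<forall>x. u * x = x * u" and ui: "u * u = u"
  shows "Bsg Sg u = {u * P gs | gs. gs \<noteq> []}"
proof -
  have pl: "prod_list (map (\<lambda>g. u * ep g) gs) = u * P gs" if "gs \<noteq> []" for gs
    using that proof (induction gs)
    case Nil then show ?case by simp
  next
    case (Cons g gs)
    show ?case
    proof (cases "gs = []")
      case True then show ?thesis by simp
    next
      case False
      then have "prod_list (map (\<lambda>g. u * ep g) (g # gs)) = (u * ep g) * (u * P gs)" using Cons by simp
      also have "... = u * ((ep g * u) * P gs)" by (simp add: mult.assoc)
      also have "... = u * ((u * ep g) * P gs)" using uc by simp
      also have "... = (u * u) * (ep g * P gs)" by (simp add: mult.assoc)
      also have "... = u * P (g # gs)" using ui by simp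
      finally show ?thesis .
    qed
  qed
  show ?thesis
  proof (rule set_eqI, rule iffI)
    fix x assume "x \<in> Bsg Sg u"
    then obtain xs where xs: "x = prod_list xs" "xs \<noteq> []" "set xs \<subseteq> {u * ep g | g. True}"
      by (auto simp: Bsg_def sgen_def)
    define gs where "gs = map (\<lambda>y. SOME g. y = u * ep g) xs"
    have "map (\<lambda>g. u * ep g) gs = xs" unfolding gs_def map_map
    proof (rule map_idI)
      fix y assume "y \<in> set xs"
      then have "\<exists>g. y = u * ep g" using xs(3) by blast
      then have "y = u * ep (SOME g. y = u * ep g)" by (rule someI_ex)
      then show "((\<lambda>g. u * ep g) \<circ> (\<lambda>y. SOME g. y = u * ep g)) y = y" by simp
    qed
    moreover have "gs \<noteq> []" using xs(2) unfolding gs_def by simp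
    ultimately have "x = u * P gs" using pl[of gs] xs(1) by metis
    then show "x \<in> {u * P gs | gs. gs \<noteq> []}" using \<open>gs \<noteq> []\<close> by blast
  next
    fix x assume "x \<in> {u * P gs | gs. gs \<noteq> []}"
    then obtain gs where gs: "x = u * P gs" "gs \<noteq> []" by blast
    have "x = prod_list (map (\<lambda>g. u * ep g) gs)" using pl gs by simp
    moreover have "set (map (\<lambda>g. u * ep g) gs) \<subseteq> {u * ep g | g. True}" by auto
    moreover have "map (\<lambda>g. u * ep g) gs \<noteq> []" using gs by simp
    ultimately show "x \<in> Bsg Sg u" unfolding Bsg_def sgen_def mem_Collect_eq
      by (intro exI[of _ "map (\<lambda>g. u * ep g) gs"]) simp
  qed
qed

lemma finite_B: "finite {u * P gs | gs. gs \<noteq> []}"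
proof -
  let ?T = "{g. Sg g \<noteq> {0}}"
  have "{u * P gs | gs. gs \<noteq> []} \<subseteq> insert 0 ((\<lambda>A. u * P (SOME ks. set ks = A)) ` Pow ?T)"
  proof
    fix x assume "x \<in> {u * P gs | gs. gs \<noteq> []}"
    then obtain gs where x: "x = u * P gs" by blast
    show "x \<in> insert 0 ((\<lambda>A. u * P (SOME ks. set ks = A)) ` Pow ?T)"
    proof (cases "set gs \<subseteq> ?T")
      case True
      have "set (SOME ks. set ks = set gs) = set gs" by (rule someI[of "\<lambda>ks. set ks = set gs" gs]) simp
      then have "P (SOME ks. set ks = set gs) = P gs" by (rule P_set_eq)
      then have "x = (\<lambda>A. u * P (SOME ks. set ks = A)) (set gs)" using x by simp
      then show ?thesis using True by (intro insertI2 image_eqI[of _ _ "set gs"]) auto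
    next
      case False
      then obtain g where "g \<in> set gs" "Sg g = {0}" by auto
      then have "P gs = 0" using P_zero[of g gs] eps_zero_supp[of g] by simp
      then show ?thesis using x by simp
    qed
  qed
  then show ?thesis by (rule finite_subset) (simp add: fin)
qed

lemma B_mult: assumes uc: "\<forall>x. u * x = x * u" and ui: "u * u = u"
  shows "(u * P a) * (u * P b) = u * P (a @ b)"
proof -
  have "(u * P a) * (u * P b) = u * ((P a * u) * P b)" by (simp add: mult.assoc)
  also have "... = u * ((u * P a) * P b)" using uc by simp
  also have "... = (u * u) * (P a * P b)" by (simp add: mult.assoc)
  finally have "(u * P a) * (u * P b) = (u * u) * (P a * P b)" .
  then show ?thesis using ui by simp
qed

lemma B_comm: assumes uc: "\<forall>x. u * x = x * u" and ui: "u * u = u"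
  shows "(u * P a) * (u * P b) = (u * P b) * (u * P a)"
  using B_mult[OF uc ui, of a b] B_mult[OF uc ui, of b a] P_comm[of a b] by simp

lemma B_idem: assumes uc: "\<forall>x. u * x = x * u" and ui: "u * u = u"
  shows "(u * P a) * (u * P a) = u * P a"
  using B_mult[OF uc ui, of a a] P_idem[of a] by simp

lemma B_u: assumes ui: "u * u = u" shows "u * (u * P a) = u * P a"
  using ui by (simp add: mult.assoc[symmetric])

lemma B_props:
  assumes uc: "\<forall>x. u * x = x * u" and ui: "u * u = u"
  shows "finite (Bsg Sg u)"
    "\<And>a b. a \<in> Bsg Sg u \<Longrightarrow> b \<in> Bsg Sg u \<Longrightarrow> a * b = b * a"
    "\<And>a. a \<in> Bsg Sg u \<Longrightarrow> a * a = a"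
    "\<And>a b. a \<in> Bsg Sg u \<Longrightarrow> b \<in> Bsg Sg u \<Longrightarrow> a * b \<in> Bsg Sg u"
    "\<And>a. a \<in> Bsg Sg u \<Longrightarrow> u * a = a"
  unfolding Bsg_char[OF uc ui]
  subgoal using finite_B by simp
  subgoal for a b
  proof -
    assume "a \<in> {u * P gs |gs. gs \<noteq> []}" "b \<in> {u * P gs |gs. gs \<noteq> []}"
    then obtain x y where "a = u * P x" "b = u * P y" by blast
    then show ?thesis using B_comm[OF uc ui, of x y] by simp
  qed
  subgoal for a
  proof -
    assume "a \<in> {u * P gs |gs. gs \<noteq> []}"
    then obtain x where "a = u * P x" by blast
    then show ?thesis using B_idem[OF uc ui, of x] by simp
  qed
  subgoal for a b
  proof -
    assume "a \<in> {u * P gs |gs. gs \<noteq> []}" "b \<in> {u * P gs |gs. gs \<noteq> []}"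
    then obtain x y where "a = u * P x" "x \<noteq> []" "b = u * P y" by blast
    then have "a * b = u * P (x @ y)" "x @ y \<noteq> []" using B_mult[OF uc ui, of x y] by auto
    then show ?thesis by blast
  qed
  subgoal for a
  proof -
    assume "a \<in> {u * P gs |gs. gs \<noteq> []}"
    then obtain x where "a = u * P x" by blast
    then show ?thesis using B_u[OF ui, of x] by simp
  qed
  done

end


context esgr begin
lemma minimal_props:
  assumes uc: "\<forall>x. u * x = x * u" and ui: "u * u = u"
    and e: "e \<in> minimals Sg u" and sub: "is_subgroup (Nset Sg u e)"
  shows "e \<noteq> 0 \<and> e * e = e \<and> (\<forall>x. e * x = x * e) \<and> u * e = e \<and>
         strongly_graded_by Sg e (Nset Sg u e)"
proof -
  define N where "N = Nset Sg u e"
  note BP = B_props[OF uc ui]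
  have eB: "e \<in> Bsg Sg u" "e \<noteq> 0" and emin: "\<forall>b\<in>Bsg Sg u - {0}. b = b * e \<longrightarrow> b = e"
    using e unfolding minimals_def by auto
  obtain gs where egs: "e = u * P gs" "gs \<noteq> []" using eB(1) unfolding Bsg_char[OF uc ui] by blast
  have ee: "e * e = e" using BP(3) eB by blast
  have ue: "u * e = e" using BP(5) eB by blast
  have eu: "e * u = e" using ue uc by metis
  have uepB: "u * ep g \<in> Bsg Sg u" for g
    unfolding Bsg_char[OF uc ui] by (rule CollectI, rule exI[of _ "[g]"]) simp
  have absorb: "e * b = 0 \<or> e * b = e" if "b \<in> Bsg Sg u" for b
  proof -
    have c: "e * b \<in> Bsg Sg u" using BP(4) eB that by blast
    have "(e * b) * e = e * (b * e)" by (simp add: mult.assoc)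
    also have "... = e * (e * b)" using BP(2)[OF that eB(1)] by simp
    also have "... = e * b" using ee by (simp add: mult.assoc[symmetric])
    finally have h: "(e * b) * e = e * b" .
    show ?thesis
    proof (cases "e * b = 0")
      case False
      then have "e * b \<in> Bsg Sg u - {0}" using c by simp
      then have "e * b = e * b * e \<longrightarrow> e * b = e" using emin by blast
      then show ?thesis using h by simp
    qed simp
  qed
  have eE: "e * ep g = (if g \<in> N then e else 0)" for g
  proof -
    have "e * ep g = e * (u * ep g)" using eu by (metis mult.assoc)
    then show ?thesis using absorb[OF uepB[of g]] unfolding N_def Nset_def by auto
  qed
  have Ncl: "g + h \<in> N" "- g \<in> N" if "g \<in> N" "h \<in> N" for g h
    using sub that unfolding N_def is_subgroup_def by auto
  have Nneg: "- g \<in> N" if "g \<in> N" for g using sub that unfolding N_def is_subgroup_def by auto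
  have Nneg': "- g \<notin> N" if "g \<notin> N" for g using Nneg[of "-g"] that by auto
  have gsN: "set gs \<subseteq> N"
  proof
    fix h assume h: "h \<in> set gs"
    have "e * ep h = u * (P gs * ep h)" using egs by (simp add: mult.assoc)
    also have "... = e" using P_absorb[OF h] egs by simp
    finally show "h \<in> N" using eE[of h] eB(2) by (auto split: if_splits)
  qed
  have eP: "e * P ks = e" if "set ks \<subseteq> N" for ks
    using that proof (induction ks)
    case (Cons k ks)
    then have "k \<in> N" by simp
    have "e * P (k # ks) = (e * ep k) * P ks" by (simp add: mult.assoc)
    also have "... = e" using eE[of k] \<open>k \<in> N\<close> Cons by simp
    finally show ?case .
  qed simp
  have Pe: "P ks * e = e * P ks" for ks
  proof -
    have "P ks * e = u * (P ks * P gs)" using egs uc by (metis mult.assoc)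
    also have "... = e * P ks" using egs by (simp add: P_comm[of ks gs] mult.assoc)
    finally show ?thesis .
  qed
  have Ee: "ep h * e = e * ep h" for h using Pe[of "[h]"] by simp
  have hom: "e * s = s * e" if s: "s \<in> Sg g" for g s
  proof (cases "g \<in> N")
    case True
    let ?P1 = "P (map (\<lambda>h. g + h) gs)"
    let ?P2 = "P (map (\<lambda>h. - g + h) gs)"
    have m1: "set (map (\<lambda>h. g + h) gs) \<subseteq> N" using gsN True Ncl by auto
    have m2: "set (map (\<lambda>h. - g + h) gs) \<subseteq> N" using gsN True Ncl Nneg by auto
    have 1: "s * e = u * ?P1 * s"
    proof -
      have "s * e = (s * u) * P gs" using egs by (simp add: mult.assoc)
      also have "... = u * (s * P gs)" using uc by (simp add: mult.assoc)
      also have "... = u * ?P1 * s" using P_shift[OF s] by (simp add: mult.assoc)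
      finally show ?thesis .
    qed
    have 2: "e * (s * e) = e * s"
    proof -
      have "e * (s * e) = ((e * u) * ?P1) * s" using 1 by (simp add: mult.assoc)
      also have "... = e * s" using eu eP[OF m1] by simp
      finally show ?thesis .
    qed
    have 3: "e * s = s * (u * ?P2)"
    proof -
      have "e * s = u * (P gs * s)" using egs by (simp add: mult.assoc)
      also have "... = (u * s) * ?P2" using P_shift_left[OF s] by (simp add: mult.assoc)
      also have "... = s * (u * ?P2)" using uc by (simp add: mult.assoc)
      finally show ?thesis .
    qed
    have 4: "(e * s) * e = s * e"
    proof -
      have "(e * s) * e = s * (u * (?P2 * e))" using 3 by (simp add: mult.assoc)
      also have "... = s * (u * e)" using Pe[of "map (\<lambda>h. - g + h) gs"] eP[OF m2] by simp
      also have "... = s * e" using ue by simp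
      finally show ?thesis .
    qed
    show ?thesis using 2 4 by (metis mult.assoc)
  next
    case False
    have "e * s = (e * ep g) * s" using eps_left[OF s] by (simp add: mult.assoc)
    also have "... = 0" using eE[of g] False by simp
    finally have a: "e * s = 0" .
    have "s * e = s * (ep (- g) * e)" using eps_right[OF s] by (metis mult.assoc)
    also have "... = 0" using Ee[of "-g"] eE[of "-g"] Nneg'[OF False] by simp
    finally show ?thesis using a by simp
  qed
  have cen: "\<forall>x. e * x = x * e" using central_from_homog hom by blast
  have lm0: "e * s = 0" if "s \<in> Sg g" "g \<notin> N" for g s
  proof -
    have "e * s = (e * ep g) * s" using eps_left[OF that(1)] by (simp add: mult.assoc)
    then show ?thesis using eE[of g] that(2) by simp
  qed
  have eab: "(e * a) * (e * b) = e * (a * b)" for a b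
  proof -
    have "(e * a) * (e * b) = e * ((a * e) * b)" by (simp add: mult.assoc)
    also have "... = e * ((e * a) * b)" using cen by simp
    also have "... = (e * e) * (a * b)" by (simp add: mult.assoc)
    finally show ?thesis using ee by simp
  qed
  have sg: "strongly_graded_by Sg e N"
    unfolding strongly_graded_by_def
  proof (intro conjI allI impI ballI)
    fix g assume "g \<notin> N"
    then show "lmult e (Sg g) = {0}" unfolding lmult_def using lm0 zero_in[of g] by force
  next
    fix g h assume g: "g \<in> N" and h: "h \<in> N"
    show "prodset (lmult e (Sg g)) (lmult e (Sg h)) = lmult e (Sg (g + h))"
    proof
      show "prodset (lmult e (Sg g)) (lmult e (Sg h)) \<subseteq> lmult e (Sg (g + h))"
      proof
        fix z assume "z \<in> prodset (lmult e (Sg g)) (lmult e (Sg h))"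
        then obtain n :: nat and x y where z: "z = (\<Sum>i<n. x i * y i)"
          and xy: "\<forall>i<n. x i \<in> lmult e (Sg g) \<and> y i \<in> lmult e (Sg h)"
          unfolding mem_prodset by blast
        have "\<forall>i\<in>{..<n}. \<exists>p. (fst p \<in> Sg g \<and> snd p \<in> Sg h \<and> x i = e * fst p \<and> y i = e * snd p)"
        proof
          fix i assume "i \<in> {..<n}"
          then obtain a b where "a \<in> Sg g" "x i = e * a" "b \<in> Sg h" "y i = e * b"
            using xy unfolding lmult_def by blast
          then show "\<exists>p. (fst p \<in> Sg g \<and> snd p \<in> Sg h \<and> x i = e * fst p \<and> y i = e * snd p)"
            by (intro exI[of _ "(a, b)"]) simp
        qed
        then obtain f where f0: "\<forall>i\<in>{..<n}. fst (f i) \<in> Sg g \<and> snd (f i) \<in> Sg h \<and> x i = e * fst (f i) \<and> y i = e * snd (f i)"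
          by (metis (no_types, lifting) bchoice)
        then have f: "\<And>i. i < n \<Longrightarrow> fst (f i) \<in> Sg g \<and> snd (f i) \<in> Sg h \<and> x i = e * fst (f i) \<and> y i = e * snd (f i)"
          by simp
        have "z = (\<Sum>i<n. e * (fst (f i) * snd (f i)))"
          unfolding z using f eab by (intro sum.cong) auto
        also have "... = e * (\<Sum>i<n. fst (f i) * snd (f i))" by (simp add: sum_distrib_left)
        finally have "z = e * (\<Sum>i<n. fst (f i) * snd (f i))" .
        moreover have "(\<Sum>i<n. fst (f i) * snd (f i)) \<in> Sg (g + h)"
          using sum_in_addsub[OF addsub, of n "\<lambda>i. fst (f i) * snd (f i)"] f mult_in by blast
        ultimately show "z \<in> lmult e (Sg (g + h))" unfolding lmult_def by blast
      qed
    next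
      show "lmult e (Sg (g + h)) \<subseteq> prodset (lmult e (Sg g)) (lmult e (Sg h))"
      proof
        fix w assume "w \<in> lmult e (Sg (g + h))"
        then obtain z where z: "z \<in> Sg (g + h)" "w = e * z" unfolding lmult_def by blast
        obtain n :: nat and a b where ab: "ep g = (\<Sum>i<n. a i * b i)" "\<forall>i<n. a i \<in> Sg g \<and> b i \<in> Sg (- g)"
          using eps_repr by blast
        have "w = (e * ep g) * z" using z eE[of g] g by simp
        also have "... = (\<Sum>i<n. (e * a i) * (e * (b i * z)))"
          unfolding ab sum_distrib_left sum_distrib_right using eab by (simp add: mult.assoc)
        finally have w: "w = (\<Sum>i<n. (e * a i) * (e * (b i * z)))" .
        have "b i * z \<in> Sg h" if "i < n" for i
        proof -
          have "b i * z \<in> Sg (- g + (g + h))" using mult_in ab that z by blast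
          then show ?thesis by (simp add: add.assoc[symmetric])
        qed
        then have "\<forall>i<n. e * a i \<in> lmult e (Sg g) \<and> e * (b i * z) \<in> lmult e (Sg h)"
          using ab unfolding lmult_def by blast
        then show "w \<in> prodset (lmult e (Sg g)) (lmult e (Sg h))" unfolding mem_prodset w
          by (intro exI[of _ n] exI[of _ "\<lambda>i. e * a i"] exI[of _ "\<lambda>i. e * (b i * z)"]) simp
      qed
    qed
  qed
  show ?thesis using eB(2) ee cen ue sg unfolding N_def by blast
qed

end


context esgr begin

lemma Bsg_zero: "Bsg Sg 0 = {0}"
proof -
  have "Bsg Sg 0 = {0 * P gs | gs. gs \<noteq> []}" by (rule Bsg_char) auto
  also have "... = {0}" by (auto intro: exI[of _ "[0]"])
  finally show ?thesis .
qed

lemma minimals_zero: "minimals Sg 0 = {}" unfolding minimals_def Bsg_zero by auto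

lemma step:
  assumes uc: "\<forall>x. u * x = x * u" and ui: "u * u = u"
    and sub: "\<forall>e\<in>minimals Sg u. is_subgroup (Nset Sg u e)"
  shows "finite (minimals Sg u)"
    and "\<forall>x. (u - sum id (minimals Sg u)) * x = x * (u - sum id (minimals Sg u))"
    and "(u - sum id (minimals Sg u)) * (u - sum id (minimals Sg u)) = u - sum id (minimals Sg u)"
    and "(u - sum id (minimals Sg u)) * u = u - sum id (minimals Sg u)"
    and "\<forall>e\<in>minimals Sg u. (u - sum id (minimals Sg u)) * e = 0"
    and "\<forall>e\<in>minimals Sg u. \<forall>e'\<in>minimals Sg u. e \<noteq> e' \<longrightarrow> e * e' = 0"
proof -
  let ?M = "minimals Sg u"
  define m where "m = sum id ?M"
  note BP = B_props[OF uc ui]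
  have "?M \<subseteq> Bsg Sg u" unfolding minimals_def by blast
  then show fM: "finite ?M" using BP(1) by (rule finite_subset)
  have MP: "e \<noteq> 0 \<and> e * e = e \<and> (\<forall>x. e * x = x * e) \<and> u * e = e" if "e \<in> ?M" for e
  proof -
    have "is_subgroup (Nset Sg u e)" using sub that by blast
    from minimal_props[OF uc ui that this] show ?thesis by blast
  qed
  have orth: "e * e' = 0" if "e \<in> ?M" "e' \<in> ?M" "e \<noteq> e'" for e e'
  proof -
    have a: "e \<in> Bsg Sg u - {0}" "\<forall>c\<in>Bsg Sg u - {0}. c = c * e \<longrightarrow> c = e"
      using that(1) unfolding minimals_def by blast+
    have b: "e' \<in> Bsg Sg u - {0}" "\<forall>c\<in>Bsg Sg u - {0}. c = c * e' \<longrightarrow> c = e'"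
      using that(2) unfolding minimals_def by blast+
    show ?thesis by (rule minimal_orth[of "Bsg Sg u", OF BP(2) BP(3) BP(4) a b that(3)])
  qed
  show "\<forall>e\<in>?M. \<forall>e'\<in>?M. e \<noteq> e' \<longrightarrow> e * e' = 0" using orth by blast
  have me: "m * e = e" if "e \<in> ?M" for e
  proof -
    have "m * e = (\<Sum>e'\<in>?M. e' * e)" unfolding m_def by (simp add: sum_distrib_right)
    also have "... = e * e + (\<Sum>e'\<in>?M - {e}. e' * e)" using sum.remove[OF fM that] by simp
    finally have 1: "m * e = e * e + (\<Sum>e'\<in>?M - {e}. e' * e)" .
    have "(\<Sum>e'\<in>?M - {e}. e' * e) = 0" using orth that by (intro sum.neutral) auto
    moreover have "e * e = e" using MP[OF that] by blast
    ultimately show ?thesis using 1 by simp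
  qed
  have mc: "m * x = x * m" for x
  proof -
    have "m * x = (\<Sum>e\<in>?M. e * x)" unfolding m_def by (simp add: sum_distrib_right)
    also have "... = (\<Sum>e\<in>?M. x * e)" by (intro sum.cong refl) (use MP in blast)
    also have "... = x * m" unfolding m_def by (simp add: sum_distrib_left)
    finally show ?thesis .
  qed
  have mm: "m * m = m"
  proof -
    have "m * m = (\<Sum>e\<in>?M. e * m)" unfolding m_def by (simp add: sum_distrib_right)
    also have "... = (\<Sum>e\<in>?M. e)" by (intro sum.cong refl) (metis me mc)
    finally show ?thesis unfolding m_def by simp
  qed
  have um: "u * m = m"
  proof -
    have "u * m = (\<Sum>e\<in>?M. u * e)" unfolding m_def by (simp add: sum_distrib_left)
    also have "... = (\<Sum>e\<in>?M. e)" by (intro sum.cong refl) (use MP in blast)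
    finally show ?thesis unfolding m_def by simp
  qed
  have mu: "m * u = m" using mc[of u] um by simp
  show "\<forall>x. (u - sum id ?M) * x = x * (u - sum id ?M)"
    unfolding m_def[symmetric]
  proof
    fix x
    have "(u - m) * x = u * x - m * x" by (simp add: left_diff_distrib)
    also have "... = x * u - x * m" using uc mc[of x] by metis
    also have "... = x * (u - m)" by (simp add: right_diff_distrib)
    finally show "(u - m) * x = x * (u - m)" .
  qed
  show "(u - sum id ?M) * (u - sum id ?M) = u - sum id ?M"
    unfolding m_def[symmetric]
  proof -
    have "(u - m) * (u - m) = (u * u - m * u) - (u * m - m * m)" by (simp add: left_diff_distrib right_diff_distrib)
    then show "(u - m) * (u - m) = u - m" using ui um mu mm by simp
  qed
  show "(u - sum id ?M) * u = u - sum id ?M"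
    unfolding m_def[symmetric]
  proof -
    have "(u - m) * u = u * u - m * u" by (simp add: left_diff_distrib)
    then show "(u - m) * u = u - m" using ui mu by simp
  qed
  show "\<forall>e\<in>?M. (u - sum id ?M) * e = 0"
    unfolding m_def[symmetric]
  proof
    fix e assume e: "e \<in> ?M"
    have "(u - m) * e = u * e - m * e" by (simp add: left_diff_distrib)
    moreover have "u * e = e" using MP[OF e] by blast
    ultimately show "(u - m) * e = 0" using me[OF e] by simp
  qed
qed

end


context esgr begin

lemma global:
  assumes hyp: "\<forall>j. one_seq Sg j \<noteq> 0 \<longrightarrow>
           (\<forall>e \<in> minimals Sg (one_seq Sg j). is_subgroup (Nset Sg (one_seq Sg j) e))"
  shows "(\<exists>L. one_seq Sg L = 0) \<and>
    (\<exists>E :: 'a set. finite E \<and> sum id E = 1 \<and>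
       (\<forall>e\<in>E. e \<noteq> 0 \<and> e * e = e \<and> (\<forall>x. e * x = x * e)) \<and>
       (\<forall>e\<in>E. \<forall>e'\<in>E. e \<noteq> e' \<longrightarrow> e * e' = 0) \<and>
       (\<forall>e\<in>E.
          (\<exists>j. one_seq Sg j \<noteq> 0 \<and> e \<in> minimals Sg (one_seq Sg j) \<and>
               strongly_graded_by Sg e (Nset Sg (one_seq Sg j) e)) \<or>
          (\<exists>l. e = one_seq Sg l \<and> trivially_graded Sg e)))"
proof -
  define U where "U = one_seq Sg"
  define M where "M j = minimals Sg (U j)" for j
  have sub: "\<forall>e\<in>M j. is_subgroup (Nset Sg (U j) e)" for j
  proof (cases "U j = 0")
    case True then show ?thesis unfolding M_def using minimals_zero by simp
  next
    case False then show ?thesis using hyp unfolding M_def U_def by blast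
  qed
  have US: "U (Suc j) = U j - sum id (M j)" for j unfolding U_def M_def by simp
  have inv: "(\<forall>x. U j * x = x * U j) \<and> U j * U j = U j" for j
  proof (induction j)
    case 0 show ?case unfolding U_def by simp
  next
    case (Suc j)
    then have a: "\<forall>x. U j * x = x * U j" "U j * U j = U j" by blast+
    show ?case unfolding US M_def using step(2,3)[OF a sub[of j, unfolded M_def]] by blast
  qed
  have uc: "\<forall>x. U j * x = x * U j" and ui: "U j * U j = U j" for j using inv by blast+
  note stp = step[OF uc ui sub[unfolded M_def]]
  have fM: "finite (M j)" for j using stp(1) unfolding M_def .
  have MP: "e \<noteq> 0 \<and> e * e = e \<and> (\<forall>x. e * x = x * e) \<and> U j * e = e \<and> strongly_graded_by Sg e (Nset Sg (U j) e)"
    if "e \<in> M j" for e j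
  proof -
    have "is_subgroup (Nset Sg (U j) e)" using sub that by blast
    from minimal_props[OF uc ui that[unfolded M_def] this] show ?thesis by blast
  qed
  have Udec1: "U (Suc j) * U j = U (Suc j)" for j using stp(4) unfolding US M_def .
  have Ukill: "U (Suc j) * e = 0" if "e \<in> M j" for e j using stp(5) that unfolding US M_def by blast
  have orth_same: "e * e' = 0" if "e \<in> M j" "e' \<in> M j" "e \<noteq> e'" for e e' j
    using stp(6) that unfolding M_def by blast
  have Udec: "U j * U k = U j" if "k \<le> j" for j k
    using that
  proof (induction j rule: dec_induct)
    case base then show ?case using ui by simp
  next
    case (step n)
    have "U (Suc n) * U k = (U (Suc n) * U n) * U k" using Udec1 by simp
    also have "... = U (Suc n) * (U n * U k)" by (simp add: mult.assoc)
    also have "... = U (Suc n)" using step.IH Udec1 by simp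
    finally show ?case .
  qed
  have orth_diff: "e' * e = 0" if "e \<in> M i" "e' \<in> M j" "i < j" for e e' i j
  proof -
    have e'U: "e' * U j = e'" using MP[OF that(2)] by metis
    have "U j * U (Suc i) = U j" using Udec that(3) by simp
    then have "e' * e = e' * (U j * (U (Suc i) * e))" using e'U by (metis mult.assoc)
    also have "... = 0" using Ukill[OF that(1)] by simp
    finally show ?thesis .
  qed
  define c where "c j = card (insert 0 (Bsg Sg (U j)))" for j
  have cpos: "1 \<le> c j" for j
    unfolding c_def using B_props(1)[OF uc[of j] ui[of j]] by (simp add: card_gt_0_iff Suc_le_eq)
  have cdec: "c (Suc j) < c j" if nz: "U j \<noteq> 0" for j
  proof -
    let ?A = "insert 0 (Bsg Sg (U j))"
    let ?f = "\<lambda>x. U (Suc j) * x"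
    have fA: "finite ?A" using B_props(1)[OF uc[of j] ui[of j]] by simp
    have img: "?f ` ?A = insert 0 (Bsg Sg (U (Suc j)))"
    proof -
      have "?f ` {U j * P gs | gs. gs \<noteq> []} = {U (Suc j) * P gs | gs. gs \<noteq> []}"
      proof
        show "?f ` {U j * P gs | gs. gs \<noteq> []} \<subseteq> {U (Suc j) * P gs | gs. gs \<noteq> []}"
        proof
          fix y assume "y \<in> ?f ` {U j * P gs | gs. gs \<noteq> []}"
          then obtain gs where "gs \<noteq> []" "y = U (Suc j) * (U j * P gs)" by blast
          moreover have "U (Suc j) * (U j * P gs) = U (Suc j) * P gs"
            by (simp add: mult.assoc[symmetric] Udec1)
          ultimately show "y \<in> {U (Suc j) * P gs | gs. gs \<noteq> []}" by blast
        qed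
      next
        show "{U (Suc j) * P gs | gs. gs \<noteq> []} \<subseteq> ?f ` {U j * P gs | gs. gs \<noteq> []}"
        proof
          fix y assume "y \<in> {U (Suc j) * P gs | gs. gs \<noteq> []}"
          then obtain gs where gs: "gs \<noteq> []" "y = U (Suc j) * P gs" by blast
          have "U (Suc j) * (U j * P gs) = U (Suc j) * P gs"
            by (simp add: mult.assoc[symmetric] Udec1)
          then have "y = ?f (U j * P gs)" using gs by simp
          moreover have "U j * P gs \<in> {U j * P gs | gs. gs \<noteq> []}" using gs by blast
          ultimately show "y \<in> ?f ` {U j * P gs | gs. gs \<noteq> []}" by blast
        qed
      qed
      then show ?thesis by (simp add: Bsg_char[OF uc[of j] ui[of j]] Bsg_char[OF uc[of "Suc j"] ui[of "Suc j"]])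
    qed
    have "U j \<in> Bsg Sg (U j)"
    proof -
      have "U j = U j * P [0]" using eps0 by simp
      then show ?thesis unfolding Bsg_char[OF uc[of j] ui[of j]] by blast
    qed
    note BPj = B_props[OF uc[of j] ui[of j]]
    have "\<exists>a\<in>Bsg Sg (U j) - {0}. \<forall>b\<in>Bsg Sg (U j) - {0}. b = b * a \<longrightarrow> b = a"
      apply (rule exists_minimal[where x="U j"])
          apply (rule BPj(1))
         apply (rule \<open>U j \<in> Bsg Sg (U j)\<close>)
        apply (rule nz)
       apply (erule (1) BPj(2))
      apply (erule BPj(3))
      done
    then obtain e where e: "e \<in> Bsg Sg (U j) - {0}" "\<forall>b\<in>Bsg Sg (U j) - {0}. b = b * e \<longrightarrow> b = e"
      by (rule bexE)
    have eM: "e \<in> M j" unfolding M_def minimals_def mem_Collect_eq using e by (intro conjI)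
    have "\<not> inj_on ?f ?A"
    proof
      assume "inj_on ?f ?A"
      moreover have "?f e = ?f 0" using Ukill[OF eM] by simp
      moreover have "e \<in> ?A" "0 \<in> ?A" using e(1) by auto
      ultimately have "e = 0" by (rule inj_onD)
      then show False using e(1) by simp
    qed
    note ninj = this
    have iff: "inj_on ?f ?A \<longleftrightarrow> card (?f ` ?A) = card ?A" by (rule inj_on_iff_eq_card[OF fA])
    have "card (?f ` ?A) \<noteq> card ?A"
    proof
      assume "card (?f ` ?A) = card ?A"
      with iff have "inj_on ?f ?A" by (rule iffD2)
      with ninj show False by contradiction
    qed
    moreover have "card (?f ` ?A) \<le> card ?A" using card_image_le[OF fA] .
    ultimately show ?thesis unfolding c_def img[symmetric] by simp
  qed
  have bound: "(\<forall>i<j. U i \<noteq> 0) \<longrightarrow> c j + j \<le> c 0" for j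
  proof (induction j)
    case (Suc j)
    show ?case
    proof
      assume "\<forall>i<Suc j. U i \<noteq> 0"
      then have "\<forall>i<j. U i \<noteq> 0" "U j \<noteq> 0" by auto
      then show "c (Suc j) + Suc j \<le> c 0" using Suc cdec[of j] by simp
    qed
  qed simp
  have "\<exists>i<Suc (c 0). U i = 0"
  proof (rule ccontr)
    assume "\<not> (\<exists>i<Suc (c 0). U i = 0)"
    then have "c (Suc (c 0)) + Suc (c 0) \<le> c 0" using bound by blast
    then show False using cpos[of "Suc (c 0)"] by simp
  qed
  then obtain L where L: "U L = 0" by blast
  define E where "E = (\<Union>j\<in>{..<L}. M j)"
  have finE: "finite E" unfolding E_def using fM by blast
  have disj0: "M i \<inter> M j = {}" if "i \<noteq> j" for i j
  proof -
    show "M i \<inter> M j = {}"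
    proof (rule ccontr)
      assume "M i \<inter> M j \<noteq> {}"
      then obtain e where "e \<in> M i" "e \<in> M j" by blast
      moreover have "e * e = e" "e \<noteq> 0" using MP[OF \<open>e \<in> M i\<close>] by blast+
      ultimately show False
      proof (cases "i < j")
        case True then show False using orth_diff[OF \<open>e \<in> M i\<close> \<open>e \<in> M j\<close> True] \<open>e * e = e\<close> \<open>e \<noteq> 0\<close> by simp
      next
        case False then have "j < i" using \<open>i \<noteq> j\<close> by simp
        then show False using orth_diff[OF \<open>e \<in> M j\<close> \<open>e \<in> M i\<close>] \<open>e * e = e\<close> \<open>e \<noteq> 0\<close> by simp
      qed
    qed
  qed
  have disj: "\<forall>i\<in>{..<L}. \<forall>j\<in>{..<L}. i \<noteq> j \<longrightarrow> M i \<inter> M j = {}"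
    using disj0 by blast
  have "sum id E = (\<Sum>j<L. sum id (M j))"
    unfolding E_def by (rule sum.UNION_disjoint) (use fM disj in auto)
  also have "... = (\<Sum>j<L. U j - U (Suc j))" by (intro sum.cong refl) (use US in simp)
  also have "... = U 0 - U L" by (rule sum_lessThan_telescope')
  also have "... = 1" using L unfolding U_def by simp
  finally have sumE: "sum id E = 1" .
  have props: "\<forall>e\<in>E. e \<noteq> 0 \<and> e * e = e \<and> (\<forall>x. e * x = x * e)"
  proof
    fix e assume "e \<in> E"
    then obtain j where j: "e \<in> M j" unfolding E_def by blast
    from MP[OF j] show "e \<noteq> 0 \<and> e * e = e \<and> (\<forall>x. e * x = x * e)" by (elim conjE) (intro conjI)
  qed
  have orthE: "\<forall>e\<in>E. \<forall>e'\<in>E. e \<noteq> e' \<longrightarrow> e * e' = 0"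
  proof (intro ballI impI)
    fix e e' assume "e \<in> E" "e' \<in> E" "e \<noteq> e'"
    then obtain i j where ij: "e \<in> M i" "e' \<in> M j" unfolding E_def by blast
    consider "i = j" | "i < j" | "j < i" by linarith
    then show "e * e' = 0"
    proof cases
      case 1 then show ?thesis using orth_same ij \<open>e \<noteq> e'\<close> by blast
    next
      case 2
      have "e' * e = 0" using orth_diff[OF ij 2] .
      moreover have "\<forall>x. e * x = x * e" using MP[OF ij(1)] by (elim conjE)
      then have "e * e' = e' * e" by (rule spec)
      ultimately show ?thesis by simp
    next
      case 3 then show ?thesis using orth_diff[OF ij(2) ij(1)] by blast
    qed
  qed
  have struct: "\<forall>e\<in>E. \<exists>j. U j \<noteq> 0 \<and> e \<in> minimals Sg (U j) \<and> strongly_graded_by Sg e (Nset Sg (U j) e)"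
  proof
    fix e assume "e \<in> E"
    then obtain j where j: "e \<in> M j" unfolding E_def by blast
    have "U j \<noteq> 0" using j minimals_zero unfolding M_def by auto
    moreover have "e \<in> minimals Sg (U j)" using j unfolding M_def .
    moreover have "strongly_graded_by Sg e (Nset Sg (U j) e)" using MP[OF j] by (elim conjE)
    ultimately show "\<exists>j. U j \<noteq> 0 \<and> e \<in> minimals Sg (U j) \<and> strongly_graded_by Sg e (Nset Sg (U j) e)"
      by (intro exI[of _ j] conjI)
  qed
  have part1: "\<exists>L. U L = 0" using L by (rule exI)
  have part2: "\<exists>E :: 'a set. finite E \<and> sum id E = 1 \<and>
       (\<forall>e\<in>E. e \<noteq> 0 \<and> e * e = e \<and> (\<forall>x. e * x = x * e)) \<and>
       (\<forall>e\<in>E. \<forall>e'\<in>E. e \<noteq> e' \<longrightarrow> e * e' = 0) \<and>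
       (\<forall>e\<in>E.
          (\<exists>j. U j \<noteq> 0 \<and> e \<in> minimals Sg (U j) \<and>
               strongly_graded_by Sg e (Nset Sg (U j) e)) \<or>
          (\<exists>l. e = U l \<and> trivially_graded Sg e))"
    apply (rule exI[of _ E])
    apply (intro conjI)
        apply (rule finE)
       apply (rule sumE)
      apply (rule props)
     apply (rule orthE)
    apply (rule ballI, rule disjI1, erule struct[rule_format])
    done
  show ?thesis
    unfolding U_def[symmetric] using part1 part2 by (rule conjI)
qed

end


theorem mainTheorem12:
  fixes Sg :: "'g::group_add \<Rightarrow> 'a::ring_1 set"
  assumes "epsilon_strongly_graded Sg"
    and "finite {g. Sg g \<noteq> {0}}"
    and "\<forall>j. one_seq Sg j \<noteq> 0 \<longrightarrow>
           (\<forall>e \<in> minimals Sg (one_seq Sg j). is_subgroup (Nset Sg (one_seq Sg j) e))"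
  shows "(\<exists>L. one_seq Sg L = 0) \<and>
    (\<exists>E :: 'a set. finite E \<and> sum id E = 1 \<and>
       (\<forall>e\<in>E. e \<noteq> 0 \<and> e * e = e \<and> (\<forall>x. e * x = x * e)) \<and>
       (\<forall>e\<in>E. \<forall>e'\<in>E. e \<noteq> e' \<longrightarrow> e * e' = 0) \<and>
       (\<forall>e\<in>E.
          (\<exists>j. one_seq Sg j \<noteq> 0 \<and> e \<in> minimals Sg (one_seq Sg j) \<and>
               strongly_graded_by Sg e (Nset Sg (one_seq Sg j) e)) \<or>
          (\<exists>l. e = one_seq Sg l \<and> trivially_graded Sg e)))"
proof -
  interpret esgr Sg using assms(1,2) by unfold_locales
  show ?thesis using global[OF assms(3)] .
qed

end
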